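(* Let $n,d$ be positive integers with $d\mid 2n^2$ and $2n^2>d^2$, and let $(a,b,c)=\left(2n+d,\ \tfrac{2n^2}{d}+2n,\ \tfrac{2n^2}{d}+2n+d\right)$ (a DPT). If there exists a prime $p>2$ such that $e_p(d)$ is odd, then $\gcd(a,b,c)>1$, i.e. $(a,b,c)$ is reducible.
   Context: A Diophantine Pythagorean Triangle (DPT) is a triple $(a,b,c)$ of positive integers with $a<b<c$ and $a^2+b^2=c^2$. For a prime $p$, $e_p(d)$ denotes the exponent of $p$ in the prime factorization of $d$. *)

theory Defs
  imports "HOL-Computational_Algebra.Primes"
begin

end

theory Submission
  imports Defs
begin

theorem lemma6:
  fixes n d :: nat
  assumes "n > 0" and "d > 0"
    and "d dvd 2 * n^2"
    and "2 * n^2 > d^2"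
    and "\<exists>p::nat. prime p \<and> p > 2 \<and> odd (multiplicity p d)"
  shows "gcd (2*n + d) (gcd (2*n^2 div d + 2*n) (2*n^2 div d + 2*n + d)) > 1"
proof -
  obtain p :: nat where p: "prime p" "p > 2" "odd (multiplicity p d)" using assms(5) by blast
  define k where "k = 2*n^2 div d"
  have dk: "d * k = 2*n^2" using assms(3) k_def by simp
  have k0: "k > 0" using dk assms(1) by (metis gr0I mult_0_right mult_pos_pos zero_less_numeral zero_less_power)
  have np2: "\<not> p dvd 2" using p by (metis dvd_imp_le not_le zero_less_numeral)
  have m2: "multiplicity p (2::nat) = 0" using np2 by (simp add: not_dvd_imp_multiplicity_0)
  have "multiplicity p (d*k) = multiplicity p d + multiplicity p k"
    using p(1) assms(2) k0 by (simp add: prime_elem_multiplicity_mult_distrib)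
  moreover have "multiplicity p (2*n^2) = 2 * multiplicity p n"
    using p(1) assms(1) m2 by (simp add: prime_elem_multiplicity_mult_distrib prime_elem_multiplicity_power_distrib)
  ultimately have "odd (multiplicity p k)" using dk p(3) by (metis even_add even_mult_iff even_numeral)
  hence "multiplicity p k > 0" by (metis gr0I odd_pos)
  hence pk: "p dvd k" by (metis not_dvd_imp_multiplicity_0 less_irrefl)
  have "multiplicity p d > 0" using p(3) by (metis gr0I odd_pos)
  hence pd: "p dvd d" by (metis not_dvd_imp_multiplicity_0 less_irrefl)
  have "p dvd 2*n^2" using pd dk by (metis dvd_mult2)
  hence "p dvd n^2" using np2 p(1) by (metis prime_dvd_mult_iff)
  hence pn: "p dvd n" using p(1) prime_dvd_power by blast
  have "p dvd gcd (2*n + d) (gcd (k + 2*n) (k + 2*n + d))"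
    using pd pk pn by simp
  moreover have "gcd (2*n + d) (gcd (k + 2*n) (k + 2*n + d)) > 0" using assms(2) by simp
  ultimately have "p \<le> gcd (2*n + d) (gcd (k + 2*n) (k + 2*n + d))" by (simp add: dvd_imp_le)
  thus ?thesis using p(2) k_def by simp
qed

end
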